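(* Let $G$ be a simple graph and let $t:=\max\{\Delta(G),M(G)\}$, where $\Delta(G)$ is the maximum degree and $M(G)$ the size of a maximum matching of $G$. If $t\geq 6$, then $\operatorname{ex}(G,P_1\cup P_2)=t$.
   Context: $P_1\cup P_2$ is the vertex-disjoint union of a single edge and a path with two edges. $\operatorname{ex}(G,H)$ is the maximum number of edges of a subgraph of $G$ containing no copy of $H$. *)

theory Defs
  imports Main
begin

definition simple_graph :: "'a set \<Rightarrow> 'a set set \<Rightarrow> bool" where
  "simple_graph V E \<longleftrightarrow> finite V \<and> (\<forall>e\<in>E. e \<subseteq> V \<and> card e = 2)"

definition degree :: "'a set set \<Rightarrow> 'a \<Rightarrow> nat" where
  "degree E v = card {e\<in>E. v \<in> e}"

definition max_degree :: "'a set \<Rightarrow> 'a set set \<Rightarrow> nat" where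
  "max_degree V E = Max (insert 0 (degree E ` V))"

definition matching :: "'a set set \<Rightarrow> 'a set set \<Rightarrow> bool" where
  "matching E M \<longleftrightarrow> M \<subseteq> E \<and> (\<forall>e\<in>M. \<forall>f\<in>M. e \<noteq> f \<longrightarrow> e \<inter> f = {})"

definition matching_number :: "'a set set \<Rightarrow> nat" where
  "matching_number E = Max (card ` {M. matching E M})"

definition contains_copy :: "'a set \<Rightarrow> 'a set set \<Rightarrow> 'b set \<Rightarrow> 'b set set \<Rightarrow> bool" where
  "contains_copy V E VH EH \<longleftrightarrow>
     (\<exists>f. inj_on f VH \<and> f ` VH \<subseteq> V \<and> (\<forall>e\<in>EH. f ` e \<in> E))"

text \<open>P_1 \<union> P_2: a single edge {0,1} disjoint from a path 2-3-4 with two edges.\<close>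
definition P1_P2_vertices :: "nat set" where
  "P1_P2_vertices = {0,1,2,3,4}"

definition P1_P2_edges :: "nat set set" where
  "P1_P2_edges = {{0,1},{2,3},{3,4}}"

definition ex :: "'a set \<Rightarrow> 'a set set \<Rightarrow> 'b set \<Rightarrow> 'b set set \<Rightarrow> nat" where
  "ex V E VH EH = Max {card F | F. F \<subseteq> E \<and> \<not> contains_copy V F VH EH}"

end

theory Submission
  imports Defs
begin

definition nfree :: "'a set set \<Rightarrow> bool" where
  "nfree F \<longleftrightarrow> (\<forall>a b c d e. {a,b}\<in>F \<longrightarrow> {c,d}\<in>F \<longrightarrow> {d,e}\<in>F \<longrightarrow> \<not> distinct [a,b,c,d,e])"

lemma copy_of:
  assumes "{a,b,c,d,e} \<subseteq> V" "distinct [a,b,c,d,e]" "{a,b}\<in>F" "{c,d}\<in>F" "{d,e}\<in>F"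
  shows "contains_copy V F P1_P2_vertices P1_P2_edges"
proof -
  define f where "f = (\<lambda>n::nat. if n=0 then a else if n=1 then b else if n=2 then c else if n=3 then d else e)"
  have "inj_on f P1_P2_vertices" using assms(2) unfolding inj_on_def P1_P2_vertices_def f_def by auto
  moreover have "f ` P1_P2_vertices \<subseteq> V" using assms(1) unfolding P1_P2_vertices_def f_def by auto
  moreover have "\<forall>e\<in>P1_P2_edges. f ` e \<in> F" using assms(3-5) unfolding P1_P2_edges_def f_def by (auto simp: insert_commute)
  ultimately show ?thesis unfolding contains_copy_def by blast
qed

lemma copy_to:
  assumes "contains_copy V F P1_P2_vertices P1_P2_edges"
  shows "\<exists>a b c d e. distinct [a,b,c,d,e] \<and> {a,b}\<in>F \<and> {c,d}\<in>F \<and> {d,e}\<in>F"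
proof -
  obtain f where f: "inj_on f P1_P2_vertices" "\<forall>e\<in>P1_P2_edges. f ` e \<in> F"
    using assms unfolding contains_copy_def by blast
  have "distinct [f 0, f 1, f 2, f 3, f 4]" using f(1) unfolding inj_on_def P1_P2_vertices_def
    by (simp only: ball_simps distinct.simps list.set) auto
  moreover have "{f 0, f 1} \<in> F" "{f 2, f 3} \<in> F" "{f 3, f 4} \<in> F" using f(2) unfolding P1_P2_edges_def by auto
  ultimately show ?thesis by blast
qed

lemma nfD: "nfree F \<Longrightarrow> {a,b}\<in>F \<Longrightarrow> {c,d}\<in>F \<Longrightarrow> {d,e}\<in>F \<Longrightarrow> distinct [a,b,c,d,e] \<Longrightarrow> False"
  unfolding nfree_def by blast

lemma core_path:
  assumes nf: "nfree F" and c2: "\<forall>e\<in>F. card e = 2"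
    and ab: "{a,b}\<in>F" and bc: "{b,c}\<in>F" and ax: "{a,x}\<in>F" and d: "distinct [a,b,c,x]"
  shows "\<forall>u z. {u,z}\<in>F \<longrightarrow> z \<in> {x,a,b,c}"
proof (intro allI impI, rule ccontr)
  fix u z assume g: "{u,z}\<in>F" and z: "z\<notin>{x,a,b,c}"
  have uz: "u \<noteq> z" using c2 g by fastforce
  show False
  proof (cases "u \<in> {a,b,c}")
    case False
    then show False using nfD[OF nf g ab bc] uz z d by auto
  next
    case True
    moreover have "u \<noteq> a" proof
      assume "u = a" then have za: "{z,a}\<in>F" using g by (simp add: insert_commute)
      show False using nfD[OF nf bc za ax] d z by auto
    qed
    moreover have "u \<noteq> b" proof
      assume "u = b" then have zb: "{z,b}\<in>F" using g by (simp add: insert_commute)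
      show False using nfD[OF nf ax zb bc] d z by auto
    qed
    moreover have "u \<noteq> c" proof
      assume "u = c" then have "{z,c}\<in>F" using g by (simp add: insert_commute)
      moreover have "{c,b}\<in>F" using bc by (simp add: insert_commute)
      ultimately show False using nfD[OF nf ax] d z by auto
    qed
    ultimately show False by auto
  qed
qed

lemma tri_aux:
  assumes nf: "nfree F" and c2: "\<forall>e\<in>F. card e = 2"
    and ab: "{a,b}\<in>F" and bc: "{b,c}\<in>F" and ac: "{a,c}\<in>F" and d: "distinct [a,b,c]"
    and ay: "{a,y}\<in>F" and y: "y \<notin> {a,b,c}"
    and g: "{u,z}\<in>F" and u: "u \<in> {a,b,c}" and z: "z \<notin> {a,b,c,y}"
  shows False
proof -
  have ya: "{y,a}\<in>F" using ay by (simp add: insert_commute)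
  consider "u = a" | "u = b" | "u = c" using u by auto
  then show False
  proof cases
    case 1 then show False using nfD[OF nf bc ya, of z] g d y z by auto
  next
    case 2 then show False using nfD[OF nf g ya ac] d y z by auto
  next
    case 3
    have "{a,b}\<in>F" using ab .
    then show False using nfD[OF nf g ya ab] 3 d y z by auto
  qed
qed

lemma core_tri:
  assumes nf: "nfree F" and c2: "\<forall>e\<in>F. card e = 2"
    and ab: "{a,b}\<in>F" and bc: "{b,c}\<in>F" and ac: "{a,c}\<in>F" and d: "distinct [a,b,c]"
  shows "\<exists>y. \<forall>u z. {u,z}\<in>F \<longrightarrow> z \<in> {a,b,c,y}"
proof -
  have pend: "u \<in> {a,b,c}" if "{u,z}\<in>F" "z \<notin> {a,b,c}" for u z
  proof (rule ccontr)
    assume "u \<notin> {a,b,c}"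
    moreover have "u \<noteq> z" using c2 that(1) by fastforce
    ultimately show False using nfD[OF nf that(1) ab bc] that(2) d by auto
  qed
  show ?thesis
  proof (cases "\<exists>u y. {u,y}\<in>F \<and> y \<notin> {a,b,c}")
    case False
    then show ?thesis by blast
  next
    case True
    then obtain u0 y where uy: "{u0,y}\<in>F" "y \<notin> {a,b,c}" by blast
    have u0: "u0 \<in> {a,b,c}" using pend uy by blast
    have ba: "{b,a}\<in>F" and cb: "{c,b}\<in>F" and ca: "{c,a}\<in>F" and bc': "{b,c}\<in>F" and ab': "{a,b}\<in>F" and ac': "{a,c}\<in>F"
      using ab bc ac by (simp_all add: insert_commute)
    show ?thesis
    proof (rule exI[of _ y], intro allI impI, rule ccontr)
      fix u z assume g: "{u,z}\<in>F" and z: "z \<notin> {a,b,c,y}"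
      have u: "u \<in> {a,b,c}" using pend g z by blast
      consider "u0 = a" | "u0 = b" | "u0 = c" using u0 by auto
      then show False
      proof cases
        case 1 then show False using tri_aux[OF nf c2 ab bc ac d _ _ g u z] uy d by auto
      next
        case 2 then show False using tri_aux[OF nf c2 ba ac' bc', of y u z] uy d u g z
            by (auto simp: insert_commute)
      next
        case 3 then show False using tri_aux[OF nf c2 ca ab' cb, of y u z] uy d u g z
            by (auto simp: insert_commute)
      qed
    qed
  qed
qed

lemma card2_ex: "card e = 2 \<Longrightarrow> \<exists>u z. e = {u,z} \<and> u \<noteq> z"
  by (simp add: card_2_iff)

lemma card2_with: "card e = 2 \<Longrightarrow> w \<in> e \<Longrightarrow> \<exists>x. x \<noteq> w \<and> e = {w,x}"
  by (auto simp: card_2_iff)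

lemma four_bound:
  assumes c2: "\<forall>e\<in>F. card e = 2" and Q: "\<forall>u z. {u,z}\<in>F \<longrightarrow> z \<in> {p,q,r,s}"
  shows "card F \<le> 6"
proof -
  have "F \<subseteq> set [{p,q},{p,r},{p,s},{q,r},{q,s},{r,s}]"
  proof
    fix e assume e: "e \<in> F"
    then obtain u z where uz: "e = {u,z}" "u \<noteq> z" using c2 card2_ex by blast
    have "z \<in> {p,q,r,s}" using Q e uz by blast
    moreover have "u \<in> {p,q,r,s}" using Q e uz by (metis insert_commute)
    ultimately have "(u=p \<or> u=q \<or> u=r \<or> u=s) \<and> (z=p \<or> z=q \<or> z=r \<or> z=s)" by blast
    then show "e \<in> set [{p,q},{p,r},{p,s},{q,r},{q,s},{r,s}]" using uz
      by (elim conjE disjE) (simp_all add: insert_commute)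
  qed
  then have "card F \<le> card (set [{p,q},{p,r},{p,s},{q,r},{q,s},{r,s}])"
    by (intro card_mono) auto
  also have "\<dots> \<le> 6" using card_length[of "[{p,q},{p,r},{p,s},{q,r},{q,s},{r,s}]"] by simp
  finally show ?thesis .
qed

lemma small_half:
  assumes nf: "nfree F" and c2: "\<forall>e\<in>F. card e = 2"
    and ab: "{a,b}\<in>F" and bc: "{b,c}\<in>F" and d: "distinct [a,b,c]"
    and ax: "{a,x}\<in>F" and xa: "x \<noteq> a" and xb: "x \<noteq> b"
  shows "card F \<le> 6"
proof (cases "x = c")
  case True
  then have ac: "{a,c}\<in>F" using ax by simp
  obtain y where "\<forall>u z. {u,z}\<in>F \<longrightarrow> z \<in> {a,b,c,y}"
    using core_tri[OF nf c2 ab bc ac d] by blast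
  from four_bound[OF c2 this] show ?thesis .
next
  case False
  then have "distinct [a,b,c,x]" using d xa xb by auto
  from four_bound[OF c2 core_path[OF nf c2 ab bc ax this]] show ?thesis .
qed

lemma small:
  assumes nf: "nfree F" and c2: "\<forall>e\<in>F. card e = 2"
    and ab: "{a,b}\<in>F" and bc: "{b,c}\<in>F" and d: "distinct [a,b,c]"
    and ns: "\<forall>v. \<exists>e\<in>F. v \<notin> e"
  shows "card F \<le> 6"
proof -
  obtain f where f: "f \<in> F" "b \<notin> f" using ns by blast
  have cf: "card f = 2" using c2 f(1) by blast
  obtain x1 x2 where x: "f = {x1,x2}" "x1 \<noteq> x2" using card2_ex[OF cf] by blast
  have fx: "{x1,x2} \<in> F" using f x by simp
  have "a \<in> f \<or> c \<in> f"
  proof (rule ccontr)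
    assume "\<not> (a \<in> f \<or> c \<in> f)"
    then have "x1 \<notin> {a,b,c}" "x2 \<notin> {a,b,c}" using f(2) x by auto
    then have "distinct [x1,x2,a,b,c]" using x(2) d by simp
    then show False using nfD[OF nf fx ab bc] by blast
  qed
  then show ?thesis
  proof
    assume "a \<in> f"
    then obtain x where x1: "x \<noteq> a" "f = {a,x}" using card2_with[OF cf] by blast
    then have "{a,x} \<in> F" "x \<noteq> b" using f by auto
    then show ?thesis using small_half[OF nf c2 ab bc d] x1 by blast
  next
    assume "c \<in> f"
    then obtain x where x1: "x \<noteq> c" "f = {c,x}" using card2_with[OF cf] by blast
    then have cx: "{c,x} \<in> F" "x \<noteq> b" using f by auto
    have cb: "{c,b}\<in>F" and ba: "{b,a}\<in>F" using ab bc by (simp_all add: insert_commute)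
    have "distinct [c,b,a]" using d by auto
    from small_half[OF nf c2 cb ba this cx(1) x1(1) cx(2)] show ?thesis .
  qed
qed

lemma nf_of:
  assumes "\<forall>e\<in>E. e \<subseteq> V" "F \<subseteq> E" "\<not> contains_copy V F P1_P2_vertices P1_P2_edges"
  shows "nfree F"
  unfolding nfree_def
proof (intro allI impI notI)
  fix a b c d e assume h: "{a,b}\<in>F" "{c,d}\<in>F" "{d,e}\<in>F" "distinct [a,b,c,d,e]"
  have "{a,b} \<subseteq> V" "{c,d} \<subseteq> V" "{d,e} \<subseteq> V" using assms(1,2) h by blast+
  then have "{a,b,c,d,e} \<subseteq> V" by blast
  from copy_of[OF this h(4) h(1-3)] assms(3) show False by blast
qed

lemma free_of:
  assumes "nfree F" shows "\<not> contains_copy V F P1_P2_vertices P1_P2_edges"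
  using copy_to[of V F] assms unfolding nfree_def by blast

theorem corollary3p18:
  fixes V :: "'a set" and E :: "'a set set"
  assumes "simple_graph V E"
    and "max (max_degree V E) (matching_number E) \<ge> 6"
  shows "ex V E P1_P2_vertices P1_P2_edges = max (max_degree V E) (matching_number E)"
proof -
  define t where "t = max (max_degree V E) (matching_number E)"
  have finV: "finite V" and sub: "\<forall>e\<in>E. e \<subseteq> V" and c2E: "\<forall>e\<in>E. card e = 2"
    using assms(1) unfolding simple_graph_def by auto
  have finE: "finite E" using finite_subset[of E "Pow V"] sub finV by auto
  define S where "S = {card F | F. F \<subseteq> E \<and> \<not> contains_copy V F P1_P2_vertices P1_P2_edges}"
  have finS: "finite S"
  proof -
    have "S \<subseteq> card ` Pow E" unfolding S_def by auto
    then show ?thesis using finE finite_subset by blast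
  qed
  have finD: "finite (insert 0 (degree E ` V))" using finV by simp
  have finM: "finite (card ` {M. matching E M})"
  proof -
    have "{M. matching E M} \<subseteq> Pow E" unfolding matching_def by auto
    then show ?thesis using finE finite_subset by blast
  qed
  have degle: "degree E v \<le> max_degree V E" if "v \<in> V" for v
    unfolding max_degree_def using Max_ge[OF finD] that by blast
  have matle: "card M \<le> matching_number E" if "matching E M" for M
    unfolding matching_number_def using Max_ge[OF finM] that by blast
  have upper: "card F \<le> t" if F: "F \<subseteq> E" "\<not> contains_copy V F P1_P2_vertices P1_P2_edges" for F
  proof -
    have nf: "nfree F" using nf_of[OF sub F] .
    have c2: "\<forall>e\<in>F. card e = 2" using c2E F(1) by blast
    show ?thesis
    proof (cases "matching E F")
      case True
      then show ?thesis using matle[OF True] unfolding t_def by simp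
    next
      case False
      then obtain e1 e2 where e: "e1 \<in> F" "e2 \<in> F" "e1 \<noteq> e2" "e1 \<inter> e2 \<noteq> {}"
        using F(1) unfolding matching_def by blast
      then obtain w where w: "w \<in> e1" "w \<in> e2" by blast
      have ce1: "card e1 = 2" and ce2: "card e2 = 2" using c2 e by auto
      obtain a where a: "a \<noteq> w" "e1 = {w,a}" using card2_with[OF ce1 w(1)] by blast
      obtain c where c: "c \<noteq> w" "e2 = {w,c}" using card2_with[OF ce2 w(2)] by blast
      have ac: "a \<noteq> c" using a c e(3) by auto
      have ab: "{a,w} \<in> F" using a e(1) by (simp add: insert_commute)
      have bc: "{w,c} \<in> F" using c e(2) by simp
      have d: "distinct [a,w,c]" using a c ac by auto
      show ?thesis
      proof (cases "\<exists>v. \<forall>e\<in>F. v \<in> e")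
        case True
        then obtain v where v: "\<forall>e\<in>F. v \<in> e" by blast
        have vV: "v \<in> V" using v e(1) sub F(1) by blast
        have "F \<subseteq> {e\<in>E. v \<in> e}" using v F(1) by blast
        then have "card F \<le> degree E v" unfolding degree_def using finE by (intro card_mono) auto
        then show ?thesis using degle[OF vV] unfolding t_def by simp
      next
        case False
        then have "\<forall>v. \<exists>e\<in>F. v \<notin> e" by blast
        from small[OF nf c2 ab bc d this] show ?thesis using assms(2) unfolding t_def by simp
      qed
    qed
  qed
  have tS: "t \<in> S"
  proof (cases "matching_number E \<le> max_degree V E")
    case True
    then have tD: "t = max_degree V E" unfolding t_def by simp
    have "max_degree V E \<in> insert 0 (degree E ` V)" unfolding max_degree_def using Max_in[OF finD] by blast
    moreover have "max_degree V E \<noteq> 0" using assms(2) True by simp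
    ultimately obtain v where v: "v \<in> V" "max_degree V E = degree E v" by auto
    define F where "F = {e\<in>E. v \<in> e}"
    have "nfree F" unfolding nfree_def
    proof (intro allI impI)
      fix a b c d e assume h: "{a,b}\<in>F" "{c,d}\<in>F" "{d,e}\<in>F"
      then have "v \<in> {a,b}" "v \<in> {c,d}" "v \<in> {d,e}" unfolding F_def by blast+
      then show "\<not> distinct [a,b,c,d,e]" by auto
    qed
    then have "\<not> contains_copy V F P1_P2_vertices P1_P2_edges" by (rule free_of)
    moreover have "card F = t" using tD v unfolding F_def degree_def by simp
    moreover have "F \<subseteq> E" unfolding F_def by blast
    ultimately have "t = card F \<and> F \<subseteq> E \<and> \<not> contains_copy V F P1_P2_vertices P1_P2_edges"
      by simp
    then show ?thesis unfolding S_def by blast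
  next
    case False
    then have tM: "t = matching_number E" unfolding t_def by simp
    have "matching_number E \<in> card ` {M. matching E M}" unfolding matching_number_def
      by (rule Max_in[OF finM]) (auto simp: matching_def)
    then obtain M where M: "matching E M" "card M = t" using tM by auto
    have "nfree M" unfolding nfree_def
    proof (intro allI impI)
      fix a b c d e assume h: "{a,b}\<in>M" "{c,d}\<in>M" "{d,e}\<in>M"
      show "\<not> distinct [a,b,c,d,e]"
      proof
        assume dd: "distinct [a,b,c,d,e]"
        then have "c \<notin> {d,e}" by simp
        then have "{c,d} \<noteq> {d,e}" by blast
        moreover have "d \<in> {c,d} \<inter> {d,e}" by simp
        moreover have dis: "\<forall>e\<in>M. \<forall>f\<in>M. e \<noteq> f \<longrightarrow> e \<inter> f = {}" using M(1) unfolding matching_def by simp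
        ultimately show False using dis[rule_format, OF h(2) h(3)] by simp
      qed
    qed
    then have "\<not> contains_copy V M P1_P2_vertices P1_P2_edges" by (rule free_of)
    moreover have "M \<subseteq> E" using M(1) unfolding matching_def by blast
    ultimately have "t = card M \<and> M \<subseteq> E \<and> \<not> contains_copy V M P1_P2_vertices P1_P2_edges"
      using M(2) by simp
    then show ?thesis unfolding S_def by blast
  qed
  have le: "y \<le> t" if yS: "y \<in> S" for y
  proof -
    obtain F where "y = card F" "F \<subseteq> E" "\<not> contains_copy V F P1_P2_vertices P1_P2_edges"
      using yS unfolding S_def by blast
    then show ?thesis using upper by simp
  qed
  have "Max S = t" by (rule Max_eqI[OF finS le tS])
  then show ?thesis unfolding ex_def S_def t_def .
qed

end
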